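(* Let $G$ be a linear group (a subgroup of $GL_n(K)$ for some field $K$ and some $n$). Then the commutator subgroup $F'$ of $F$ is a set of weak identities in $G$.
   Context: Let $F$ be the free group on countably many generators $g_1,g_2,\dots$, and $F'=[F,F]$ its commutator subgroup. For $N\ge 1$, $F^{\times N}$ denotes the direct product of $N$ copies of $F$ and $i_k: F\to F^{\times N}$ the inclusion as the $k$-th factor. A subset $S\subset F$ is a set of weak identities in a group $G$ if there exists an integer $N\ge1$ such that for any elements $s_1,\dots,s_N\in S$ and any homomorphism $\rho: F^{\times N}\to G$ there is an index $k\in\{1,\dots,N\}$ with $\rho(i_k(s_k))=1$. *)

theory Defs
  imports "HOL-Analysis.Analysis" "HOL-Algebra.Algebra"
begin

text \<open>Free group on countably many generators g_0, g_1, ... (indexed by nat).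
 Elements are reduced words; a letter (i, False) is g_i, a letter (i, True) is g_i^-1.\<close>

type_synonym fword = "(nat \<times> bool) list"

fun freduced :: "fword \<Rightarrow> bool" where
  "freduced [] = True"
| "freduced [x] = True"
| "freduced (x # y # zs) = (\<not> (fst x = fst y \<and> snd x \<noteq> snd y) \<and> freduced (y # zs))"

definition fcons :: "nat \<times> bool \<Rightarrow> fword \<Rightarrow> fword" where
  "fcons x ys = (case ys of [] \<Rightarrow> [x]
     | y # ys' \<Rightarrow> (if fst x = fst y \<and> snd x \<noteq> snd y then ys' else x # ys))"

definition fmult :: "fword \<Rightarrow> fword \<Rightarrow> fword" where
  "fmult xs ys = foldr fcons xs ys"

definition free_group :: "fword monoid" where
  "free_group = \<lparr>carrier = {w. freduced w}, mult = fmult, one = []\<rparr>"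

definition free_commutator :: "fword set" where
  "free_commutator = derived free_group (carrier free_group)"

definition free_power :: "nat \<Rightarrow> (nat \<Rightarrow> fword) monoid" where
  "free_power N = product_group {1..N} (\<lambda>_. free_group)"

definition free_incl :: "nat \<Rightarrow> nat \<Rightarrow> fword \<Rightarrow> (nat \<Rightarrow> fword)" where
  "free_incl N k x = (\<lambda>i\<in>{1..N}. if i = k then x else \<one>\<^bsub>free_group\<^esub>)"

definition weak_identities :: "('g, 'b) monoid_scheme \<Rightarrow> fword set \<Rightarrow> bool" where
  "weak_identities G S \<longleftrightarrow> (\<exists>N::nat. N \<ge> 1 \<and>
     (\<forall>s. (\<forall>k\<in>{1..N}. s k \<in> S) \<longrightarrow>
       (\<forall>\<rho> \<in> hom (free_power N) G. \<exists>k\<in>{1..N}. \<rho> (free_incl N k (s k)) = \<one>\<^bsub>G\<^esub>)))"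

text \<open>General linear group GL_n(K), with n given by the finite index type 'n.\<close>
definition GL :: "('k::field ^'n^'n) monoid" where
  "GL = \<lparr>carrier = {A. invertible A}, mult = (**), one = mat 1\<rparr>"

end

theory Submission
  imports Defs
begin


definition flat :: "'k::field^'n^'n \<Rightarrow> 'k^('n \<times> 'n)" where
  "flat A = (\<chi> p. A $ fst p $ snd p)"
definition unflat :: "'k::field^('n \<times> 'n) \<Rightarrow> 'k^'n^'n" where
  "unflat v = (\<chi> i j. v $ (i, j))"

lemma unflat_flat[simp]: "unflat (flat A) = A"
  by (simp add: flat_def unflat_def vec_eq_iff)

lemma flat_inj: "flat A = flat B \<Longrightarrow> A = B"
  by (metis unflat_flat)

lemma comm_add:
  fixes b :: "'k::field^'n^'n"
  shows "flat (b ** unflat (x + y) - unflat (x + y) ** b) =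
     flat (b ** unflat x - unflat x ** b) + flat (b ** unflat y - unflat y ** b)"
  by (simp add: flat_def unflat_def vec_eq_iff matrix_matrix_mult_def
      sum.distrib sum_subtractf algebra_simps sum_distrib_left)

lemma comm_scale:
  fixes b :: "'k::field^'n^'n"
  shows "flat (b ** unflat (c *s x) - unflat (c *s x) ** b) =
     c *s flat (b ** unflat x - unflat x ** b)"
  by (simp add: flat_def unflat_def vec_eq_iff matrix_matrix_mult_def
      sum.distrib sum_subtractf algebra_simps sum_distrib_left)

lemma comm_sum:
  fixes b :: "'k::field^'n^'n"
  assumes "finite A"
  shows "flat (b ** unflat (\<Sum>x\<in>A. f x *s x) - unflat (\<Sum>x\<in>A. f x *s x) ** b) =
     (\<Sum>x\<in>A. f x *s flat (b ** unflat x - unflat x ** b))"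
  using assms
proof (induction A rule: finite_induct)
  case empty
  then show ?case by (simp add: flat_def unflat_def vec_eq_iff matrix_matrix_mult_def)
next
  case (insert a A)
  then show ?case by (simp add: comm_add comm_scale)
qed

lemma LA:
  fixes a b :: "nat \<Rightarrow> 'k::field^'n^'n"
  assumes comm: "\<And>j k. j\<in>I \<Longrightarrow> k\<in>I \<Longrightarrow> j\<noteq>k \<Longrightarrow> a k ** b j = b j ** a k"
    and nc: "\<And>k. k\<in>I \<Longrightarrow> a k ** b k \<noteq> b k ** a k" and fin: "finite I"
  shows "card I \<le> CARD('n \<times> 'n)"
proof -
  define A where "A = (flat \<circ> a) ` I"
  have inj: "inj_on (flat \<circ> a) I"
  proof (rule inj_onI)
    fix j k assume jk: "j \<in> I" "k \<in> I" "(flat \<circ> a) j = (flat \<circ> a) k"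
    then have "a j = a k" by (auto intro: flat_inj)
    show "j = k"
    proof (rule ccontr)
      assume "j \<noteq> k"
      then have "a k ** b j = b j ** a k" using comm jk by auto
      then show False using nc[OF jk(1)] \<open>a j = a k\<close> by simp
    qed
  qed
  define D where "D j = (\<lambda>v. flat (b j ** unflat v - unflat v ** b j))" for j
  have "vec.independent A"
  proof (rule vec.independent_if_scalars_zero)
    show "finite A" using fin A_def by simp
    fix f x assume s: "(\<Sum>x\<in>A. f x *s x) = 0" and x: "x \<in> A"
    then obtain j where j: "j \<in> I" "x = flat (a j)" using A_def by auto
    have "D j (\<Sum>x\<in>A. f x *s x) = (\<Sum>x\<in>A. f x *s D j x)"
      unfolding D_def by (rule comm_sum) fact
    also have "\<dots> = f x *s D j x"
    proof (rule sum.remove[OF \<open>finite A\<close> x, THEN trans])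
      have "\<forall>y \<in> A - {x}. f y *s D j y = 0"
      proof
        fix y assume "y \<in> A - {x}"
        then obtain k where k: "k \<in> I" "y = flat (a k)" "k \<noteq> j" using A_def j by auto
        then have "D j y = 0" using comm[OF j(1) k(1)] unfolding k(2) D_def unflat_flat by (simp add: flat_def vec_eq_iff)
        then show "f y *s D j y = 0" by simp
      qed
      then have "(\<Sum>y\<in>A - {x}. f y *s D j y) = 0" by (intro sum.neutral) blast
      then show "f x *s D j x + (\<Sum>y\<in>A - {x}. f y *s D j y) = f x *s D j x" by simp
    qed
    finally have "f x *s D j x = 0" using s by (simp add: D_def flat_def unflat_def vec_eq_iff matrix_matrix_mult_def)
    moreover have "D j x \<noteq> 0"
    proof
      assume "D j x = 0"
      then have "flat (b j ** a j - a j ** b j) = flat 0" unfolding j(2) D_def unflat_flat by (simp add: flat_def vec_eq_iff)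
      then have "b j ** a j - a j ** b j = 0" by (rule flat_inj)
      then show False using nc[OF j(1)] by simp
    qed
    ultimately show "f x = 0" by (auto simp add: vec_eq_iff)
  qed
  then have "card A \<le> CARD('n \<times> 'n)"
    using vec.independent_card_le_dim[of A UNIV] vec_dim_card[where 'a='k and 'n="'n\<times>'n"] by simp
  then show ?thesis using card_image[OF inj] A_def by simp
qed


lemma freduced_tl: "freduced (y # ys) \<Longrightarrow> freduced ys"
  by (cases ys) auto

lemma fcons_reduced: "freduced ys \<Longrightarrow> freduced (fcons x ys)"
  by (cases ys) (auto simp: fcons_def dest: freduced_tl)

lemma fmult_Cons: "fmult (x # xs) ys = fcons x (fmult xs ys)"
  by (simp add: fmult_def)

lemma fmult_Nil: "fmult [] ys = ys"
  by (simp add: fmult_def)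

lemma fmult_reduced: "freduced ys \<Longrightarrow> freduced (fmult xs ys)"
  by (induction xs) (auto simp: fmult_Cons fmult_Nil fcons_reduced)

lemma fcons_Nil: "fcons x [] = [x]"
  by (simp add: fcons_def)

lemma fcons_Cons_cancel: "fst x = fst y \<Longrightarrow> snd x \<noteq> snd y \<Longrightarrow> fcons x (y # ys) = ys"
  by (simp add: fcons_def)

lemma fcons_Cons_keep: "\<not> (fst x = fst y \<and> snd x \<noteq> snd y) \<Longrightarrow> fcons x (y # ys) = x # y # ys"
  by (simp add: fcons_def)

lemma fcons_cancel:
  assumes "freduced w"
  shows "fcons x (fcons (fst x, \<not> snd x) w) = w"
proof (cases w)
  case Nil
  then show ?thesis by (simp add: fcons_Nil fcons_Cons_cancel)
next
  case (Cons y w')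
  show ?thesis
  proof (cases "y = x")
    case True
    then have 1: "fcons (fst x, \<not> snd x) w = w'" using Cons by (simp add: fcons_Cons_cancel)
    show ?thesis
    proof (cases w')
      case Nil
      then show ?thesis using Cons True 1 by (simp add: fcons_Nil)
    next
      case (Cons z w'')
      then have "\<not> (fst x = fst z \<and> snd x \<noteq> snd z)" using assms \<open>w = y # w'\<close> True by simp
      then show ?thesis using 1 Cons \<open>w = y # w'\<close> True by (simp add: fcons_Cons_keep)
    qed
  next
    case False
    then have "\<not> (fst (fst x, \<not> snd x) = fst y \<and> snd (fst x, \<not> snd x) \<noteq> snd y)"
      by (cases x, cases y) auto
    then have 1: "fcons (fst x, \<not> snd x) w = (fst x, \<not> snd x) # w" using Cons by (simp add: fcons_Cons_keep)
    show ?thesis unfolding 1 by (rule fcons_Cons_cancel) auto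
  qed
qed

lemma fmult_fcons:
  assumes "freduced ys" "freduced zs"
  shows "fmult (fcons x ys) zs = fcons x (fmult ys zs)"
proof (cases ys)
  case Nil
  then show ?thesis by (simp add: fcons_Nil fmult_Cons fmult_Nil)
next
  case (Cons y ys')
  show ?thesis
  proof (cases "fst x = fst y \<and> snd x \<noteq> snd y")
    case True
    then have y: "y = (fst x, \<not> snd x)" by (cases y) auto
    have "fcons x (fmult ys zs) = fcons x (fcons (fst x, \<not> snd x) (fmult ys' zs))"
      using Cons y by (simp add: fmult_Cons)
    also have "\<dots> = fmult ys' zs"
      by (rule fcons_cancel[OF fmult_reduced[OF assms(2)]])
    finally show ?thesis using Cons True by (simp add: fcons_Cons_cancel)
  next
    case False
    then show ?thesis using Cons by (simp add: fcons_Cons_keep fmult_Cons)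
  qed
qed

lemma fmult_assoc:
  assumes "freduced ys" "freduced zs"
  shows "fmult (fmult xs ys) zs = fmult xs (fmult ys zs)"
  by (induction xs) (auto simp: fmult_Cons fmult_Nil fmult_fcons fmult_reduced assms)

lemma fmult_Nil_right: "freduced xs \<Longrightarrow> fmult xs [] = xs"
proof (induction xs)
  case Nil
  then show ?case by (simp add: fmult_Nil)
next
  case (Cons x xs)
  then have "fmult xs [] = xs" using freduced_tl by blast
  then show ?case using Cons.prems by (cases xs) (auto simp: fmult_Cons fcons_Nil fcons_Cons_keep)
qed

fun flinv :: "fword \<Rightarrow> fword" where
  "flinv [] = []"
| "flinv (x # xs) = fmult (flinv xs) [(fst x, \<not> snd x)]"

lemma flinv_reduced: "freduced (flinv xs)"
  by (induction xs) (auto intro: fmult_reduced)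

lemma flinv_inv: "freduced xs \<Longrightarrow> fmult (flinv xs) xs = []"
proof (induction xs)
  case Nil
  then show ?case by (simp add: fmult_Nil)
next
  case (Cons x xs)
  have "fmult (flinv (x # xs)) (x # xs) = fmult (flinv xs) (fmult [(fst x, \<not> snd x)] (x # xs))"
    using Cons.prems by (simp add: fmult_assoc)
  also have "fmult [(fst x, \<not> snd x)] (x # xs) = xs"
    by (simp add: fmult_Cons fmult_Nil fcons_Cons_cancel)
  finally show ?case using Cons freduced_tl by metis
qed

lemma free_group_monoid: "monoid free_group"
  by (rule monoidI) (auto simp: free_group_def fmult_reduced fmult_assoc fmult_Nil fmult_Nil_right)

lemma free_group_group: "group free_group"
proof (rule monoid.group_l_invI[OF free_group_monoid])
  fix x assume "x \<in> carrier free_group"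
  then show "\<exists>y\<in>carrier free_group. y \<otimes>\<^bsub>free_group\<^esub> x = \<one>\<^bsub>free_group\<^esub>"
    by (intro bexI[of _ "flinv x"]) (auto simp: free_group_def flinv_reduced flinv_inv)
qed

lemma GL_group: "group (GL :: ('k::field^'n^'n) monoid)"
proof -
  have i1: "invertible (mat 1 :: 'k^'n^'n)"
    unfolding invertible_def by (intro exI[of _ "mat 1"]) (simp add: matrix_mul_lid)
  have m: "monoid (GL :: ('k::field^'n^'n) monoid)"
    using i1 by (rule_tac monoidI) (auto simp: GL_def invertible_mult matrix_mul_assoc matrix_mul_lid matrix_mul_rid
        intro: invertible_mult)
  show ?thesis
  proof (rule monoid.group_l_invI[OF m])
    fix x :: "'k^'n^'n" assume "x \<in> carrier GL"
    then obtain y where "x ** y = mat 1" "y ** x = mat 1" by (auto simp: GL_def invertible_def)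
    then show "\<exists>y\<in>carrier GL. y \<otimes>\<^bsub>GL\<^esub> x = \<one>\<^bsub>GL\<^esub>"
      by (intro bexI[of _ y]) (auto simp: GL_def invertible_def)
  qed
qed

lemma derived_kill:
  assumes gh: "group_hom F H h"
    and comm: "\<And>u v. u \<in> carrier F \<Longrightarrow> v \<in> carrier F \<Longrightarrow> h u \<otimes>\<^bsub>H\<^esub> h v = h v \<otimes>\<^bsub>H\<^esub> h u"
    and x: "x \<in> derived F (carrier F)"
  shows "h x = \<one>\<^bsub>H\<^esub>"
proof -
  interpret group_hom F H h by (rule gh)
  have k: "a \<otimes>\<^bsub>F\<^esub> b \<otimes>\<^bsub>F\<^esub> inv\<^bsub>F\<^esub> a \<otimes>\<^bsub>F\<^esub> inv\<^bsub>F\<^esub> b \<in> kernel F H h"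
    if a: "a \<in> carrier F" and b: "b \<in> carrier F" for a b
  proof -
    have ha: "h a \<in> carrier H" and hb: "h b \<in> carrier H" using a b by simp_all
    have "h (a \<otimes>\<^bsub>F\<^esub> b \<otimes>\<^bsub>F\<^esub> inv\<^bsub>F\<^esub> a \<otimes>\<^bsub>F\<^esub> inv\<^bsub>F\<^esub> b)
        = h a \<otimes>\<^bsub>H\<^esub> h b \<otimes>\<^bsub>H\<^esub> inv\<^bsub>H\<^esub> h a \<otimes>\<^bsub>H\<^esub> inv\<^bsub>H\<^esub> h b"
      using a b by (simp only: hom_mult hom_inv G.m_closed G.inv_closed)
    also have "\<dots> = h b \<otimes>\<^bsub>H\<^esub> h a \<otimes>\<^bsub>H\<^esub> inv\<^bsub>H\<^esub> h a \<otimes>\<^bsub>H\<^esub> inv\<^bsub>H\<^esub> h b"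
      by (simp only: comm[OF a b])
    also have "\<dots> = h b \<otimes>\<^bsub>H\<^esub> (h a \<otimes>\<^bsub>H\<^esub> inv\<^bsub>H\<^esub> h a) \<otimes>\<^bsub>H\<^esub> inv\<^bsub>H\<^esub> h b"
      using ha hb by (simp only: H.m_assoc H.inv_closed)
    also have "\<dots> = \<one>\<^bsub>H\<^esub>"
      using ha hb by (simp only: H.r_inv H.r_one)
    finally have "h (a \<otimes>\<^bsub>F\<^esub> b \<otimes>\<^bsub>F\<^esub> inv\<^bsub>F\<^esub> a \<otimes>\<^bsub>F\<^esub> inv\<^bsub>F\<^esub> b) = \<one>\<^bsub>H\<^esub>" .
    moreover have "a \<otimes>\<^bsub>F\<^esub> b \<otimes>\<^bsub>F\<^esub> inv\<^bsub>F\<^esub> a \<otimes>\<^bsub>F\<^esub> inv\<^bsub>F\<^esub> b \<in> carrier F"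
      using a b by (simp only: G.m_closed G.inv_closed)
    ultimately show ?thesis by (simp only: kernel_def mem_Collect_eq)
  qed
  have "derived_set F (carrier F) \<subseteq> kernel F H h"
  proof
    fix y assume "y \<in> derived_set F (carrier F)"
    then obtain a b where "a \<in> carrier F" "b \<in> carrier F"
      "y = a \<otimes>\<^bsub>F\<^esub> b \<otimes>\<^bsub>F\<^esub> inv\<^bsub>F\<^esub> a \<otimes>\<^bsub>F\<^esub> inv\<^bsub>F\<^esub> b" by auto
    then show "y \<in> kernel F H h" using k by simp
  qed
  then have "derived F (carrier F) \<subseteq> kernel F H h"
    unfolding derived_def by (rule G.generate_subgroup_incl[OF _ subgroup_kernel])
  then show ?thesis using x by (auto simp: kernel_def)
qed

lemma incl_hom: "free_incl N k \<in> hom free_group (free_power N)"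
  unfolding hom_def
  by (auto simp: free_power_def product_group_def free_incl_def free_group_def fmult_Nil
      fmult_reduced PiE_iff intro!: ext)

lemma incl_comm:
  assumes "j \<noteq> k" "x \<in> carrier free_group" "y \<in> carrier free_group"
  shows "free_incl N j x \<otimes>\<^bsub>free_power N\<^esub> free_incl N k y =
         free_incl N k y \<otimes>\<^bsub>free_power N\<^esub> free_incl N j x"
  using assms
  by (auto simp: free_power_def product_group_def free_incl_def free_group_def fmult_Nil
      fmult_Nil_right intro!: ext)

theorem theorem3p4:
  fixes G :: "('k::field ^'n::finite^'n) set"
  assumes "subgroup G GL"
  shows "weak_identities (GL\<lparr>carrier := G\<rparr>) free_commutator"
proof -
  let ?G = "GL\<lparr>carrier := G\<rparr>"
  have grpG: "group ?G" using subgroup.subgroup_is_group[OF assms GL_group] .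
  have F: "group free_group" by (rule free_group_group)
  have multG: "x \<otimes>\<^bsub>?G\<^esub> y = x ** y" for x y by (simp add: GL_def)
  define N where "N = CARD('n \<times> 'n) + 1"
  show ?thesis unfolding weak_identities_def
  proof (intro exI[of _ N] conjI allI impI ballI)
    show "1 \<le> N" by (simp add: N_def)
    fix s assume s: "\<forall>k\<in>{1..N}. s k \<in> free_commutator"
    fix \<rho> assume \<rho>: "\<rho> \<in> hom (free_power N) ?G"
    show "\<exists>k\<in>{1..N}. \<rho> (free_incl N k (s k)) = \<one>\<^bsub>?G\<^esub>"
    proof (rule ccontr)
      assume ne: "\<not> (\<exists>k\<in>{1..N}. \<rho> (free_incl N k (s k)) = \<one>\<^bsub>?G\<^esub>)"
      have key: "\<exists>u v. u \<in> carrier free_group \<and> v \<in> carrier free_group \<and>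
          \<rho> (free_incl N k u) ** \<rho> (free_incl N k v) \<noteq> \<rho> (free_incl N k v) ** \<rho> (free_incl N k u)"
        if k: "k \<in> {1..N}" for k
      proof (rule ccontr)
        assume "\<not> ?thesis"
        then have comm: "\<And>u v. u \<in> carrier free_group \<Longrightarrow> v \<in> carrier free_group \<Longrightarrow>
           (\<rho> \<circ> free_incl N k) u \<otimes>\<^bsub>?G\<^esub> (\<rho> \<circ> free_incl N k) v =
           (\<rho> \<circ> free_incl N k) v \<otimes>\<^bsub>?G\<^esub> (\<rho> \<circ> free_incl N k) u"
          by (auto simp: multG GL_def)
        have gh: "group_hom free_group ?G (\<rho> \<circ> free_incl N k)"
          by (rule group_hom.intro[OF F grpG]) (rule group_hom_axioms.intro[OF hom_compose[OF incl_hom \<rho>]])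
        have "(\<rho> \<circ> free_incl N k) (s k) = \<one>\<^bsub>?G\<^esub>"
          by (rule derived_kill[OF gh comm]) (use s k in \<open>auto simp: free_commutator_def\<close>)
        then show False using ne k by auto
      qed
      then obtain u v where uv: "\<And>k. k \<in> {1..N} \<Longrightarrow> u k \<in> carrier free_group \<and> v k \<in> carrier free_group \<and>
          \<rho> (free_incl N k (u k)) ** \<rho> (free_incl N k (v k)) \<noteq> \<rho> (free_incl N k (v k)) ** \<rho> (free_incl N k (u k))"
        by metis
      define a where "a k = \<rho> (free_incl N k (u k))" for k
      define b where "b k = \<rho> (free_incl N k (v k))" for k
      have "card {1..N} \<le> CARD('n \<times> 'n)"
      proof (rule LA[of "{1..N}" a b])
        fix j k assume j: "j \<in> {1..N}" and k: "k \<in> {1..N}" and jk: "j \<noteq> k"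
        have "a k ** b j = \<rho> (free_incl N k (u k) \<otimes>\<^bsub>free_power N\<^esub> free_incl N j (v j))"
          using uv[OF j] uv[OF k] \<rho> incl_hom[of N k] incl_hom[of N j]
          by (simp add: a_def b_def hom_mult multG[symmetric] hom_in_carrier)
        also have "\<dots> = \<rho> (free_incl N j (v j) \<otimes>\<^bsub>free_power N\<^esub> free_incl N k (u k))"
          using incl_comm[of k j "u k" "v j" N] jk uv[OF j] uv[OF k] by simp
        also have "\<dots> = b j ** a k"
          using uv[OF j] uv[OF k] \<rho> incl_hom[of N k] incl_hom[of N j]
          by (simp add: a_def b_def hom_mult multG[symmetric] hom_in_carrier)
        finally show "a k ** b j = b j ** a k" .
      next
        fix k assume "k \<in> {1..N}"
        then show "a k ** b k \<noteq> b k ** a k" using uv by (simp add: a_def b_def)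
      qed simp
      then show False by (simp add: N_def)
    qed
  qed
qed

end
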